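(* Let $\alpha>1$ be fixed. For a positive integer $n$ let $A=\{1,2,\dots,2^n\}$, $B=\{1,2,\dots,\lfloor n^{\alpha}\rfloor\}$, let $P_n$ be the set of primes $p\le n^{\alpha}$, and define the family $H(n)=\{h_p:A\to B\}_{p\in P_n}$ by $h_p(a)=(a\bmod p)+1$, where $a\bmod p$ is the remainder of $a$ upon division by $p$. Then for all sufficiently large $n$, the family $H(n)$ is $\frac{\alpha}{n^{\alpha-1}}$-almost universal.
   Context: A family $\{h_p:X\to Y\}_{p\in P}$ indexed by a finite set $P$ is $\varepsilon$-almost universal if for all distinct $x_1,x_2\in X$, $|\{p\in P : h_p(x_1)=h_p(x_2)\}|\le\varepsilon|P|$; equivalently, for $p$ drawn uniformly from $P$, $\Pr[h_p(x_1)=h_p(x_2)]\le\varepsilon$. *)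

theory Defs
  imports Complex_Main "HOL-Computational_Algebra.Primes"
begin

definition almost_universal ::
  "'p set \<Rightarrow> 'x set \<Rightarrow> 'y set \<Rightarrow> ('p \<Rightarrow> 'x \<Rightarrow> 'y) \<Rightarrow> real \<Rightarrow> bool" where
  "almost_universal P X Y h \<epsilon> \<longleftrightarrow>
     finite P \<and> (\<forall>p\<in>P. \<forall>x\<in>X. h p x \<in> Y) \<and>
     (\<forall>x1\<in>X. \<forall>x2\<in>X. x1 \<noteq> x2 \<longrightarrow>
        real (card {p\<in>P. h p x1 = h p x2}) \<le> \<epsilon> * real (card P))"

end

theory Submission
  imports Defs "HOL-Analysis.Analysis" "HOL-Real_Asymp.Real_Asymp"
begin

definition qpoly :: "real poly" where "qpoly = [:0, -1, 3, -2:]"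

lemma poly_qpoly: "poly qpoly x = x * (1 - x) * (2 * x - 1)"
  by (simp add: qpoly_def algebra_simps)

lemma coeff_qpoly_Ints: "coeff qpoly i \<in> \<int>"
  unfolding qpoly_def by (auto simp: coeff_pCons split: nat.split)

lemma degree_qpoly: "degree qpoly \<le> 3"
  unfolding qpoly_def by simp

lemma coeff_mult_Ints:
  assumes "\<forall>i. coeff p i \<in> \<int>" "\<forall>i. coeff q i \<in> \<int>"
  shows "coeff (p * q) i \<in> (\<int> :: real set)"
  using assms by (auto simp: coeff_mult intro!: Ints_sum Ints_mult)

lemma coeff_qpow_Ints: "coeff (qpoly ^ m) i \<in> \<int>"
proof (induction m arbitrary: i)
  case 0 then show ?case by (simp add: coeff_1)
next
  case (Suc m) then show ?case
    by (simp only: power_Suc) (rule coeff_mult_Ints, auto simp: coeff_qpoly_Ints)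
qed

lemma poly_has_integral01:
  "(poly r has_integral (\<Sum>i\<le>degree r. coeff r i / real (Suc i))) {0..1::real}"
proof -
  define F where "F x = (\<Sum>i\<le>degree r. coeff r i * x ^ (Suc i) / real (Suc i))" for x :: real
  have d: "(F has_real_derivative poly r x) (at x)" for x
  proof -
    have "(F has_real_derivative (\<Sum>i\<le>degree r. coeff r i * (real (Suc i) * x ^ i) / real (Suc i))) (at x)"
      unfolding F_def by (intro derivative_eq_intros) auto
    moreover have "(\<Sum>i\<le>degree r. coeff r i * (real (Suc i) * x ^ i) / real (Suc i)) = poly r x"
      by (simp add: poly_altdef)
    ultimately show ?thesis by simp
  qed
  have "(poly r has_integral F 1 - F 0) {0..1}"
    by (rule fundamental_theorem_of_calculus)
       (auto intro!: has_real_derivative_iff_has_vector_derivative[THEN iffD1, OF DERIV_subset[OF d]])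
  moreover have "F 1 - F 0 = (\<Sum>i\<le>degree r. coeff r i / real (Suc i))"
    by (simp add: F_def)
  ultimately show ?thesis by simp
qed

lemma h_bound:
  fixes x :: real assumes "0 \<le> x" "x \<le> 1"
  shows "(x * (1 - x) * (2 * x - 1))^2 \<le> 1/108"
proof -
  define u where "u = x * (1 - x)"
  have u0: "0 \<le> u" using assms by (simp add: u_def)
  have e: "(x * (1 - x) * (2 * x - 1))^2 = u^2 * (1 - 4*u)"
    by (simp add: u_def power2_eq_square algebra_simps)
  have "0 \<le> (1 - 6*u)^2 * (1 + 12*u)" using u0 by simp
  then have "0 \<le> 1 - 108*u^2 + 432*u^3"
    by (simp add: power2_eq_square power3_eq_cube algebra_simps)
  then show ?thesis unfolding e by (simp add: power2_eq_square power3_eq_cube algebra_simps)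
qed

lemma h_lower:
  fixes x :: real assumes "1/4 \<le> x" "x \<le> 1/3"
  shows "1/324 \<le> (x * (1 - x) * (2 * x - 1))^2"
proof -
  have a: "3/16 \<le> x * (1 - x)"
  proof -
    have "0 \<le> (x - 1/4) * (3/4 - x)" using assms by simp
    also have "(x - 1/4) * (3/4 - x) = x - x*x - 3/16" by (simp add: field_simps)
    finally have "0 \<le> x - x*x - 3/16" .
    then show ?thesis by (simp add: algebra_simps)
  qed
  have b: "1/3 \<le> 1 - 2 * x" using assms by simp
  have "1/18 \<le> x * (1 - x) * (1 - 2 * x)"
  proof -
    have "(1/6::real) * (1/3) \<le> x * (1 - x) * (1 - 2 * x)"
      by (rule mult_mono) (use a b in auto)
    then show ?thesis by simp
  qed
  then have "(1/18)^2 \<le> (x * (1 - x) * (1 - 2 * x))^2"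
    by (rule power_mono) simp
  moreover have eq: "(x * (1 - x) * (1 - 2 * x))^2 = (x * (1 - x) * (2 * x - 1))^2"
    by (simp add: power2_eq_square algebra_simps)
  moreover have "(1/18::real)^2 = 1/324" by (simp add: power2_eq_square)
  ultimately show ?thesis by linarith
qed

lemma integral_bounds:
  fixes k :: nat
  defines "I \<equiv> (\<Sum>i\<le>degree (qpoly ^ (2*k)). coeff (qpoly ^ (2*k)) i / real (Suc i))"
  shows "0 < I" "I \<le> (1/108)^k"
proof -
  define h where "h x = (x * (1 - x) * (2 * x - 1))^2" for x :: real
  have pe: "poly (qpoly ^ (2*k)) = (\<lambda>x. h x ^ k)"
    by (rule ext) (simp add: poly_qpoly h_def power_mult)
  have hi: "((\<lambda>x. h x ^ k) has_integral I) {0..1}"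
    using poly_has_integral01[of "qpoly ^ (2*k)"] unfolding pe I_def .
  have cont: "continuous_on S (\<lambda>x. h x ^ k)" for S
    unfolding h_def by (intro continuous_intros)
  have int1: "(\<lambda>x. h x ^ k) integrable_on {a..b}" for a b
    by (rule integrable_continuous_interval[OF cont])
  have hnn: "0 \<le> h x ^ k" for x by (simp add: h_def)
  show "I \<le> (1/108)^k"
  proof -
    have c: "((\<lambda>x::real. (1/108::real)^k) has_integral (1/108)^k) {0..1}"
      using has_integral_const_real[of "(1/108::real)^k" 0 1] by (simp add: Henstock_Kurzweil_Integration.content_real)
    show "I \<le> (1/108)^k"
    proof (rule has_integral_le[OF hi c])
      fix x :: real assume "x \<in> {0..1}"
      then show "h x ^ k \<le> (1/108)^k"
        using h_bound[of x] by (intro power_mono) (auto simp: h_def)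
    qed
  qed
  have "integral {1/4..1/3::real} (\<lambda>x. (1/324::real)^k) \<le> integral {1/4..1/3} (\<lambda>x. h x ^ k)"
    by (rule integral_le) (auto intro!: int1 power_mono h_lower[unfolded h_def[symmetric]])
  also have "\<dots> \<le> integral {0..1} (\<lambda>x. h x ^ k)"
    by (rule integral_subset_le) (auto intro!: int1 hnn)
  also have "\<dots> = I" using hi by (rule integral_unique)
  finally have A: "integral {1/4..1/3::real} (\<lambda>x. (1/324::real)^k) \<le> I" .
  have B: "integral {1/4..1/3::real} (\<lambda>x. (1/324::real)^k) = (1/12) * (1/324)^k" by simp
  have C: "0 < (1/12) * (1/324::real)^k" by simp
  show "0 < I" using A B C by linarith
qed


lemma lcm_like:
  fixes N :: nat assumes "N \<ge> 1"
  shows "\<exists>Q::nat. Q > 0 \<and> (\<forall>m\<in>{1..N}. m dvd Q) \<and> Q \<le> N ^ card {p. prime p \<and> p \<le> N}"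
proof -
  define S where "S = {p::nat. prime p \<and> p \<le> N}"
  define e where "e p = Max {j. p ^ j \<le> N}" for p :: nat
  define Q where "Q = (\<Prod>p\<in>S. p ^ e p)"
  have finS: "finite S" unfolding S_def by (rule finite_subset[of _ "{..N}"]) auto
  have fin: "finite {j. p ^ j \<le> N}" if "prime p" for p
  proof (rule finite_subset[of _ "{..N}"])
    show "{j. p ^ j \<le> N} \<subseteq> {..N}"
    proof
      fix j assume "j \<in> {j. p ^ j \<le> N}"
      then have "p ^ j \<le> N" by simp
      moreover have "j < 2 ^ j" by (rule less_exp)
      moreover have "2 ^ j \<le> p ^ j" using prime_ge_2_nat[OF that] by (rule power_mono) simp
      ultimately have "j \<le> N" by linarith
      then show "j \<in> {..N}" by simp
    qed
  qed simp
  have epow: "p ^ e p \<le> N" if "prime p" for p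
  proof -
    have "e p \<in> {j. p ^ j \<le> N}" unfolding e_def
      by (rule Max_in[OF fin[OF that]]) (use assms in \<open>auto intro!: exI[of _ 0]\<close>)
    then show ?thesis by simp
  qed
  have ege: "j \<le> e p" if "prime p" "p ^ j \<le> N" for p j
    unfolding e_def by (rule Max_ge[OF fin[OF that(1)]]) (use that in simp)
  have Qpos: "Q > 0" unfolding Q_def using finS
    by (intro prod_pos) (auto simp: S_def prime_gt_0_nat)
  have "Q \<le> (\<Prod>p\<in>S. N)" unfolding Q_def
    by (rule prod_mono) (auto simp: S_def epow)
  also have "\<dots> = N ^ card S" by simp
  finally have Qle: "Q \<le> N ^ card S" .
  have dv: "m dvd Q" if m: "m \<in> {1..N}" for m
  proof (rule multiplicity_le_imp_dvd)
    show "m \<noteq> 0" using m by simp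
  next
    fix p :: nat assume p: "prime p"
    show "multiplicity p m \<le> multiplicity p Q"
    proof (cases "p \<le> N")
      case True
      have "multiplicity p Q = e p" unfolding Q_def
        by (subst multiplicity_prod_prime_powers) (use finS p True in \<open>auto simp: S_def\<close>)
      moreover have "p ^ multiplicity p m \<le> N"
      proof -
        have "p ^ multiplicity p m dvd m" by (rule multiplicity_dvd)
        then have "p ^ multiplicity p m \<le> m" using m by (intro dvd_imp_le) auto
        then show ?thesis using m by simp
      qed
      ultimately show ?thesis using ege[OF p] by simp
    next
      case False
      then have "\<not> p dvd m" using m by (auto dest: dvd_imp_le)
      then have "multiplicity p m = 0" by (rule not_dvd_imp_multiplicity_0)
      then show ?thesis by simp
    qed
  qed
  show ?thesis using Qpos dv Qle unfolding S_def by blast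
qed

lemma key108:
  fixes k Q :: nat
  assumes Q: "Q > 0" "\<forall>m\<in>{1..6*k+1}. m dvd Q"
  shows "108 ^ k \<le> real Q"
proof -
  define r where "r = qpoly ^ (2*k)"
  define I where "I = (\<Sum>i\<le>degree r. coeff r i / real (Suc i))"
  have I0: "0 < I" and I1: "I \<le> (1/108)^k" using integral_bounds[of k] unfolding I_def r_def by auto
  have degr: "degree r \<le> 6 * k"
  proof -
    have "degree r \<le> degree qpoly * (2*k)" unfolding r_def by (rule degree_power_le)
    also have "\<dots> \<le> 3 * (2 * k)" using degree_qpoly by (intro mult_right_mono) auto
    finally show ?thesis by simp
  qed
  have "real Q * I = (\<Sum>i\<le>degree r. coeff r i * real (Q div Suc i))"
  proof -
    have "real Q * I = (\<Sum>i\<le>degree r. coeff r i * (real Q / real (Suc i)))"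
      unfolding I_def by (simp add: sum_distrib_left field_simps)
    also have "\<dots> = (\<Sum>i\<le>degree r. coeff r i * real (Q div Suc i))"
    proof (rule sum.cong[OF refl])
      fix i assume "i \<in> {..degree r}"
      then have "Suc i \<in> {1..6*k+1}" using degr by auto
      then have "Suc i dvd Q" using Q by blast
      then show "coeff r i * (real Q / real (Suc i)) = coeff r i * real (Q div Suc i)"
        by (simp add: real_of_nat_div)
    qed
    finally show ?thesis .
  qed
  also have "\<dots> \<in> \<int>" unfolding r_def by (intro Ints_sum Ints_mult coeff_qpow_Ints) auto
  finally obtain z where z: "real Q * I = of_int z" by (auto elim: Ints_cases)
  have "0 < real Q * I" using Q I0 by simp
  then have "z \<ge> 1" using z by simp
  then have "1 \<le> real Q * I" using z by simp
  also have "\<dots> \<le> real Q * (1/108)^k" using I1 by (intro mult_left_mono) auto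
  finally have "1 \<le> real Q / 108 ^ k" by (simp add: power_divide)
  then show ?thesis by (simp add: field_simps)
qed

lemma pi_lower:
  fixes M :: nat assumes "M \<ge> 1"
  shows "(real M - 6) / 6 * ln 108 \<le> real (card {p. prime p \<and> p \<le> M}) * ln (real M)"
proof -
  define k where "k = (M - 1) div 6"
  define N where "N = 6 * k + 1"
  have NM: "N \<le> M" "N \<ge> 1" unfolding N_def k_def using assms by auto
  obtain Q where Q: "Q > 0" "\<forall>m\<in>{1..N}. m dvd Q" "Q \<le> N ^ card {p. prime p \<and> p \<le> N}"
    using lcm_like[OF NM(2)] by blast
  have "(108::real) ^ k \<le> real Q" using key108[of Q k] Q unfolding N_def by auto
  also have "\<dots> \<le> real (N ^ card {p. prime p \<and> p \<le> N})" using Q by simp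
  also have "\<dots> \<le> real (M ^ card {p. prime p \<and> p \<le> M})"
  proof -
    have "card {p. prime p \<and> p \<le> N} \<le> card {p. prime p \<and> p \<le> M}"
      by (rule card_mono) (use NM in \<open>auto intro: finite_subset[of _ "{..M}"]\<close>)
    then have "N ^ card {p. prime p \<and> p \<le> N} \<le> M ^ card {p. prime p \<and> p \<le> M}"
      using NM by (meson dual_order.trans power_increasing power_mono le0)
    then show ?thesis by linarith
  qed
  finally have "(108::real) ^ k \<le> real M ^ card {p. prime p \<and> p \<le> M}" by simp
  then have "ln ((108::real) ^ k) \<le> ln (real M ^ card {p. prime p \<and> p \<le> M})"
    by (subst ln_le_cancel_iff) auto
  then have L: "real k * ln 108 \<le> real (card {p. prime p \<and> p \<le> M}) * ln (real M)"
    using assms by (simp add: ln_realpow)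
  have "real M - 6 \<le> 6 * real k"
  proof -
    have "M - 1 = 6 * k + (M - 1) mod 6" unfolding k_def by simp
    moreover have "(M - 1) mod 6 < 6" by simp
    ultimately have "M \<le> 6 * k + 6" using assms by linarith
    then show ?thesis by linarith
  qed
  then have "(real M - 6) / 6 * ln 108 \<le> real k * ln 108"
    by (intro mult_right_mono) auto
  then show ?thesis using L by linarith
qed


lemma ln2_le: "ln (2::real) \<le> 7/10"
proof -
  have "(1 + 1/100::real) ^ 70 \<le> exp (1/100) ^ 70"
    by (intro power_mono exp_ge_add_one_self) auto
  also have "\<dots> = exp (of_nat 70 * (1/100))" by (rule exp_of_nat_mult[symmetric])
  finally have "(101/100::real) ^ 70 \<le> exp (7/10)" by simp
  moreover have "2 \<le> (101/100::real)^70" by (simp add: power_divide)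
  ultimately have "2 \<le> exp (7/10::real)" by linarith
  then have "ln 2 \<le> ln (exp (7/10::real))" by (subst ln_le_cancel_iff) auto
  then show ?thesis by simp
qed

lemma ln108_ge: "9/2 \<le> ln (108::real)"
proof -
  have "exp (9/2::real) ^ 2 = exp (of_nat 2 * (9/2))" by (rule exp_of_nat_mult[symmetric])
  also have "\<dots> = exp 1 ^ 9" using exp_of_nat_mult[of 9 1] by simp
  also have "\<dots> \<le> (272/100) ^ 9" using e_less_272 by (intro power_mono) auto
  also have "\<dots> \<le> 108 ^ 2" by (simp add: power_divide)
  finally have "exp (9/2::real) \<le> 108" by (rule power2_le_imp_le) simp
  then have "ln (exp (9/2::real)) \<le> ln 108" by (subst ln_le_cancel_iff) auto
  then show ?thesis by simp
qed

lemma prod_primes_dvd: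
  fixes D :: nat
  assumes "finite A" "\<forall>p\<in>A. prime p \<and> p dvd D"
  shows "\<Prod>A dvd D"
  using assms
proof (induction A rule: finite_induct)
  case empty then show ?case by simp
next
  case (insert p A)
  have "\<not> p dvd \<Prod>A"
  proof
    assume "p dvd \<Prod>A"
    then obtain q where "q \<in> A" "p dvd q" using insert by (auto simp: prime_dvd_prod_iff)
    then have "p = q" using insert by (auto simp: primes_dvd_imp_eq)
    then show False using insert \<open>q \<in> A\<close> by simp
  qed
  then have "coprime p (\<Prod>A)" using insert by (intro prime_imp_coprime) auto
  then show ?case using insert by (simp add: divides_mult)
qed

lemma count_bound:
  fixes n x1 x2 :: nat and T :: real
  assumes x: "x1 \<in> {1..2^n}" "x2 \<in> {1..2^n}" "x1 \<noteq> x2" and T: "T > 1"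
    and S: "finite S" "\<forall>p\<in>S. prime p \<and> x1 mod p = x2 mod p"
  shows "real (card S) \<le> T + real n * ln 2 / ln T"
proof -
  define D where "D = (if x2 \<le> x1 then x1 - x2 else x2 - x1)"
  have D0: "D > 0" and D1: "D < 2 ^ n" using x unfolding D_def by auto
  have dv: "p dvd D" if "p \<in> S" for p
  proof (cases "x2 \<le> x1")
    case True then show ?thesis using S that by (auto simp: D_def mod_eq_dvd_iff_nat)
  next
    case False
    then have "x2 mod p = x1 mod p" "x1 \<le> x2" using S that by auto
    then show ?thesis using False by (auto simp: D_def mod_eq_dvd_iff_nat)
  qed
  define S1 where "S1 = {p\<in>S. real p \<le> T}"
  define S2 where "S2 = {p\<in>S. \<not> real p \<le> T}"
  have "S = S1 \<union> S2" unfolding S1_def S2_def by auto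
  then have "card S \<le> card S1 + card S2" by (metis card_Un_le)
  moreover have "card S1 \<le> nat \<lfloor>T\<rfloor>"
  proof -
    have "S1 \<subseteq> {1..nat \<lfloor>T\<rfloor>}"
    proof
      fix p assume "p \<in> S1"
      then have "prime p" "real p \<le> T" using S unfolding S1_def by auto
      then show "p \<in> {1..nat \<lfloor>T\<rfloor>}" using prime_ge_1_nat[of p] by (auto simp: le_nat_floor)
    qed
    then show ?thesis by (metis card_atLeastAtMost card_mono diff_Suc_1 finite_atLeastAtMost)
  qed
  moreover have "real (nat \<lfloor>T\<rfloor>) \<le> T" using T by simp
  moreover have "real (card S2) \<le> real n * ln 2 / ln T"
  proof -
    have fS2: "finite S2" using S unfolding S2_def by auto
    have "T ^ card S2 = (\<Prod>p\<in>S2. T)" by simp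
    also have "\<dots> \<le> (\<Prod>p\<in>S2. real p)" using T by (intro prod_mono) (auto simp: S2_def)
    also have "\<dots> = real (\<Prod>S2)" by simp
    also have "\<dots> \<le> real D"
    proof -
      have "\<Prod>S2 dvd D" using fS2 by (rule prod_primes_dvd) (use S dv in \<open>auto simp: S2_def\<close>)
      then have "\<Prod>S2 \<le> D" using D0 by (rule dvd_imp_le)
      then show ?thesis by (simp only: of_nat_le_iff)
    qed
    also have "\<dots> \<le> 2 ^ n" using D1 by simp
    finally have "T ^ card S2 \<le> 2 ^ n" .
    then have "ln (T ^ card S2) \<le> ln (2 ^ n)" using T by (subst ln_le_cancel_iff) auto
    then have "real (card S2) * ln T \<le> real n * ln 2" using T by (simp add: ln_realpow)
    moreover have "ln T > 0" using T by simp
    ultimately show ?thesis by (simp add: field_simps)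
  qed
  ultimately show ?thesis by linarith
qed


theorem lemma4:
  fixes \<alpha> :: real
  assumes "\<alpha> > 1"
  shows "\<forall>\<^sub>F n in sequentially.
           almost_universal {p::nat. prime p \<and> real p \<le> real n powr \<alpha>}
             {1..(2::nat) ^ n} {1..nat \<lfloor>real n powr \<alpha>\<rfloor>}
             (\<lambda>p a. a mod p + 1) (\<alpha> / real n powr (\<alpha> - 1))"
proof -
  have e1: "eventually (\<lambda>x::real. x powr (19/20) + 7/10 * x / (19/20 * ln x) \<le> 3/4 * (x - 7) / ln x) at_top"
    by real_asymp
  have e2: "eventually (\<lambda>x::real. x powr (19/20) > 1) at_top"
    by real_asymp
  have "eventually (\<lambda>x::real. (x powr (19/20) + 7/10 * x / (19/20 * ln x) \<le> 3/4 * (x - 7) / ln x) \<and> x powr (19/20) > 1) at_top"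
    using e1 e2 by (rule eventually_conj)
  then have e3: "eventually (\<lambda>n. (real n powr (19/20) + 7/10 * real n / (19/20 * ln (real n)) \<le> 3/4 * (real n - 7) / ln (real n)) \<and> real n powr (19/20) > 1) sequentially"
    using filterlim_real_sequentially unfolding filterlim_iff by blast
  show ?thesis using e3 eventually_ge_at_top[of "8::nat"]
  proof eventually_elim
    case (elim n)
    define x where "x = real n"
    define T where "T = x powr (19/20)"
    define xa where "xa = x powr \<alpha>"
    define M where "M = nat \<lfloor>xa\<rfloor>"
    define P where "P = {p::nat. prime p \<and> real p \<le> xa}"
    have x8: "x \<ge> 8" using elim unfolding x_def by simp
    have lnx: "ln x > 0" using x8 by simp
    have T1: "T > 1" using elim unfolding T_def x_def by simp
    have asym: "T + 7/10 * x / (19/20 * ln x) \<le> 3/4 * (x - 7) / ln x"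
      using elim unfolding T_def x_def by simp
    have xax: "x \<le> xa" unfolding xa_def using powr_mono[of 1 \<alpha> x] assms x8 by simp
    have xa0: "0 \<le> xa" using xax x8 by simp
    have Piff: "real p \<le> xa \<longleftrightarrow> p \<le> M" for p
    proof -
      have "real p \<le> xa \<longleftrightarrow> int p \<le> \<lfloor>xa\<rfloor>" by (simp add: le_floor_iff)
      also have "\<dots> \<longleftrightarrow> p \<le> M" unfolding M_def using xa0 by (simp add: le_nat_iff)
      finally show ?thesis .
    qed
    have PM: "P = {p. prime p \<and> p \<le> M}" unfolding P_def using Piff by auto
    have finP: "finite P" unfolding PM by (rule finite_subset[of _ "{..M}"]) auto
    have M8: "M \<ge> 8"
    proof -
      have "real 8 \<le> xa" using xax x8 by simp
      then show ?thesis using Piff by blast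
    qed
    have Mle: "real M \<le> xa" using Piff by blast
    have Mge: "real M \<ge> xa - 1" unfolding M_def using xa0 by linarith
    have lnM: "ln (real M) \<le> \<alpha> * ln x"
    proof -
      have "ln (real M) \<le> ln xa" using M8 Mle by (subst ln_le_cancel_iff) auto
      also have "\<dots> = \<alpha> * ln x" unfolding xa_def using x8 by (simp add: ln_powr)
      finally show ?thesis .
    qed
    have A: "3/4 * (xa - 7) \<le> real (card P) * (\<alpha> * ln x)"
    proof -
      have "3/4 * (xa - 7) \<le> 3/4 * (real M - 6)" using Mge by simp
      also have "\<dots> \<le> (real M - 6) / 6 * ln 108"
      proof -
        have "0 \<le> (real M - 6) * (ln 108 / 6 - 3/4)"
          using ln108_ge M8 by (intro mult_nonneg_nonneg) auto
        moreover have "(real M - 6) / 6 * ln 108 - 3/4 * (real M - 6) = (real M - 6) * (ln 108 / 6 - 3/4)"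
          by (simp add: algebra_simps)
        ultimately show ?thesis by linarith
      qed
      also have "\<dots> \<le> real (card P) * ln (real M)" unfolding PM using pi_lower[of M] M8 by simp
      also have "\<dots> \<le> real (card P) * (\<alpha> * ln x)" using lnM by (intro mult_left_mono) auto
      finally show ?thesis .
    qed
    define y where "y = x powr (\<alpha> - 1)"
    have y1: "y \<ge> 1" unfolding y_def using assms x8 by (simp add: ge_one_powr_ge_zero)
    have xay: "xa = x * y"
    proof -
      have "x powr \<alpha> = x powr (1 + (\<alpha> - 1))" by simp
      also have "\<dots> = x powr 1 * x powr (\<alpha> - 1)" by (rule powr_add)
      finally show ?thesis unfolding xa_def y_def using x8 by simp
    qed
    have B: "3/4 * (x - 7) / ln x \<le> \<alpha> / y * real (card P)"
    proof -
      have "3/4 * (x - 7) * y = 3/4 * (xa - 7 * y)" unfolding xay by (simp add: field_simps)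
      also have "\<dots> \<le> 3/4 * (xa - 7)" using y1 by simp
      also have "\<dots> \<le> \<alpha> * real (card P) * ln x" using A by (simp add: algebra_simps)
      finally have "3/4 * (x - 7) * y \<le> \<alpha> * real (card P) * ln x" .
      then show ?thesis using lnx y1 by (simp add: field_simps)
    qed
    have C: "real (card {p \<in> P. x1 mod p + 1 = x2 mod p + 1}) \<le> \<alpha> / y * real (card P)"
      if "x1 \<in> {1..2^n}" "x2 \<in> {1..2^n}" "x1 \<noteq> x2" for x1 x2 :: nat
    proof -
      have "real (card {p \<in> P. x1 mod p + 1 = x2 mod p + 1}) \<le> T + real n * ln 2 / ln T"
        by (rule count_bound[OF that T1]) (use finP in \<open>auto simp: P_def intro: finite_subset[of _ P]\<close>)
      also have "\<dots> \<le> T + 7/10 * x / (19/20 * ln x)"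
      proof -
        have lt: "ln T = 19/20 * ln x" unfolding T_def using x8 by (simp add: ln_powr)
        have "real n * ln 2 \<le> 7/10 * x" using ln2_le x8 unfolding x_def by (simp add: mult_left_mono)
        then have "real n * ln 2 / (19/20 * ln x) \<le> 7/10 * x / (19/20 * ln x)"
          by (rule divide_right_mono) (use lnx in auto)
        then show ?thesis unfolding lt by simp
      qed
      also have "\<dots> \<le> 3/4 * (x - 7) / ln x" by (rule asym)
      also have "\<dots> \<le> \<alpha> / y * real (card P)" by (rule B)
      finally show ?thesis .
    qed
    show ?case
      unfolding almost_universal_def
    proof (intro conjI ballI impI)
      show "finite {p. prime p \<and> real p \<le> real n powr \<alpha>}" using finP unfolding P_def xa_def x_def .
    next
      fix p a assume p: "p \<in> {p. prime p \<and> real p \<le> real n powr \<alpha>}" and a: "a \<in> {1..(2::nat)^n}"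
      have "p \<in> P" using p unfolding P_def xa_def x_def by simp
      then have "prime p" "p \<le> M" unfolding PM by auto
      then have "a mod p < p" by (simp add: prime_gt_0_nat)
      then show "a mod p + 1 \<in> {1..nat \<lfloor>real n powr \<alpha>\<rfloor>}"
        using \<open>p \<le> M\<close> unfolding M_def xa_def x_def by auto
    next
      fix x1 x2 assume "x1 \<in> {1..(2::nat)^n}" "x2 \<in> {1..(2::nat)^n}" "x1 \<noteq> x2"
      from C[OF this] show "real (card {p \<in> {p. prime p \<and> real p \<le> real n powr \<alpha>}. x1 mod p + 1 = x2 mod p + 1})
          \<le> \<alpha> / real n powr (\<alpha> - 1) * real (card {p. prime p \<and> real p \<le> real n powr \<alpha>})"
        unfolding P_def xa_def x_def y_def .
    qed
  qed
qed

end
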